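(* Every factorization curve $\psi_j:\mathbb{P}(V_j)\to\mathbb{P}(\mathfrak{h})$ of a complex factorization structure $\varphi:\mathfrak{h}\to V^*$ is injective.
   Context: $V_1,\ldots,V_m$ are 2-dimensional complex vector spaces, $V^*=V_1^*\otimes\cdots\otimes V_m^*$, $\ell^0$ the annihilator of a line $\ell$, and $\Sigma^0_{j,\ell}=V_1^*\otimes\cdots\otimes\ell^0\otimes\cdots\otimes V_m^*$ ($\ell^0$ in slot $j$). A factorization structure of dimension $m$ is an injective linear map $\varphi:\mathfrak{h}\to V^*$, $\dim\mathfrak{h}=m+1$, with $\dim(\varphi(\mathfrak{h})\cap\Sigma^0_{j,\ell})=1$ for all $j$ and all $\ell$ in a nonempty Zariski-open subset of $\mathbb{P}(V_j)$. The $j$-th factorization curve $\psi_j$ is the unique regular extension to $\mathbb{P}(V_j)$ of the generically defined regular map $\ell\mapsto\varphi^{-1}(\varphi(\mathfrak{h})\cap\Sigma^0_{j,\ell})$. *)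

theory Defs
  imports Complex_Main
begin

(* V_j = C^2 (vectors = pairs), a covector alpha on C^2 is a
   function bool => complex with alpha(v) = alpha False * fst v + alpha True * snd v.
   V^* = V_1^* (x) ... (x) V_m^* is modelled as functions on multi-indices
   (bool lists of length m), zero outside length m.  Slot j is 0-based (j < m).
   h = C^(m+1), modelled as nat => complex vanishing above index m. *)

definition Vstar :: "nat \<Rightarrow> (bool list \<Rightarrow> complex) set" where
  "Vstar m = {T. \<forall>xs. length xs \<noteq> m \<longrightarrow> T xs = 0}"

definition hspace :: "nat \<Rightarrow> (nat \<Rightarrow> complex) set" where
  "hspace m = {x. \<forall>k>m. x k = 0}"

definition covec_app :: "(bool \<Rightarrow> complex) \<Rightarrow> complex \<times> complex \<Rightarrow> complex" where
  "covec_app \<alpha> v = \<alpha> False * fst v + \<alpha> True * snd v"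

text \<open>Sigma0 m j v = V_1^* (x) ... (x) l^0 (x) ... (x) V_m^*, l = span v, l^0 in slot j:
  the span of elementary tensors alpha_0 (x) ... (x) alpha_(m-1) with alpha_j(v) = 0.\<close>
definition Sigma0 :: "nat \<Rightarrow> nat \<Rightarrow> complex \<times> complex \<Rightarrow> (bool list \<Rightarrow> complex) set" where
  "Sigma0 m j v = {T. \<exists>(n::nat) (\<alpha> :: nat \<Rightarrow> nat \<Rightarrow> bool \<Rightarrow> complex).
      (\<forall>r<n. covec_app (\<alpha> r j) v = 0) \<and>
      T = (\<lambda>xs. if length xs = m then (\<Sum>r<n. \<Prod>k<m. \<alpha> r k (xs ! k)) else 0)}"

definition binform :: "nat \<Rightarrow> (nat \<Rightarrow> complex) \<Rightarrow> complex \<times> complex \<Rightarrow> complex" where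
  "binform d c v = (\<Sum>k\<le>d. c k * fst v ^ k * snd v ^ (d - k))"

text \<open>Zariski-open subsets of P^1, as sets of nonzero representatives: complements of
  common zero loci of sets of homogeneous binary forms.\<close>
definition zariski_open_P1 :: "(complex \<times> complex) set \<Rightarrow> bool" where
  "zariski_open_P1 U \<longleftrightarrow> (\<exists>F :: (nat \<times> (nat \<Rightarrow> complex)) set.
      U = {v. v \<noteq> (0, 0) \<and> (\<exists>(d, c)\<in>F. binform d c v \<noteq> 0)})"

definition factorization_structure :: "nat \<Rightarrow> ((nat \<Rightarrow> complex) \<Rightarrow> (bool list \<Rightarrow> complex)) \<Rightarrow> bool" where
  "factorization_structure m \<phi> \<longleftrightarrow>
     (\<forall>x\<in>hspace m. \<phi> x \<in> Vstar m) \<and>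
     (\<forall>x\<in>hspace m. \<forall>y\<in>hspace m. \<phi> (\<lambda>k. x k + y k) = (\<lambda>t. \<phi> x t + \<phi> y t)) \<and>
     (\<forall>x\<in>hspace m. \<forall>c. \<phi> (\<lambda>k. c * x k) = (\<lambda>t. c * \<phi> x t)) \<and>
     inj_on \<phi> (hspace m) \<and>
     (\<forall>j<m. \<exists>U. zariski_open_P1 U \<and> U \<noteq> {} \<and>
        (\<forall>v\<in>U. \<exists>T. T \<noteq> (\<lambda>_. 0) \<and>
           \<phi> ` hspace m \<inter> Sigma0 m j v = {(\<lambda>xs. c * T xs) | c. True}))"

definition regular_P1_map :: "nat \<Rightarrow> (complex \<times> complex \<Rightarrow> nat \<Rightarrow> complex) \<Rightarrow> bool" where
  "regular_P1_map m \<psi> \<longleftrightarrow> (\<exists>d (cs :: nat \<Rightarrow> nat \<Rightarrow> complex).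
      (\<forall>v. \<psi> v = (\<lambda>k. if k \<le> m then binform d (cs k) v else 0)) \<and>
      (\<forall>v. v \<noteq> (0, 0) \<longrightarrow> (\<exists>k\<le>m. binform d (cs k) v \<noteq> 0)))"

text \<open>psi is the j-th factorization curve: a regular map P(V_j) -> P(h) agreeing on a
  nonempty Zariski-open set with l |-> phi^{-1}(phi(h) \<inter> Sigma0_{j,l}).\<close>
definition factorization_curve :: "nat \<Rightarrow> ((nat \<Rightarrow> complex) \<Rightarrow> (bool list \<Rightarrow> complex)) \<Rightarrow> nat
     \<Rightarrow> (complex \<times> complex \<Rightarrow> nat \<Rightarrow> complex) \<Rightarrow> bool" where
  "factorization_curve m \<phi> j \<psi> \<longleftrightarrow> regular_P1_map m \<psi> \<and>
     (\<exists>U. zariski_open_P1 U \<and> U \<noteq> {} \<and>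
        (\<forall>v\<in>U. {x\<in>hspace m. \<phi> x \<in> \<phi> ` hspace m \<inter> Sigma0 m j v}
                = {(\<lambda>k. c * \<psi> v k) | c. True}))"

end

theory Submission
  imports Defs "HOL-Computational_Algebra.Polynomial"
begin

definition homog :: "nat \<Rightarrow> (complex \<times> complex \<Rightarrow> complex) \<Rightarrow> bool" where
  "homog e q \<longleftrightarrow> (\<forall>t a b. q (t*a, t*b) = t^e * q (a,b)) \<and>
     (\<forall>a b :: complex \<times> complex. \<exists>Q. \<forall>t. poly Q t = q (fst a + t*fst b, snd a + t*snd b))"

lemma homog_binform: "homog d (binform d c)"
  unfolding homog_def
proof safe
  fix t a b :: complex
  have "binform d c (t*a, t*b) = (\<Sum>k\<le>d. t^d * (c k * a ^ k * b ^ (d - k)))"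
    unfolding binform_def
  proof (rule sum.cong)
    fix k assume "k \<in> {..d}"
    then have "t^d = t^k * t^(d-k)" by (simp add: power_add[symmetric])
    then show "c k * fst (t * a, t * b) ^ k * snd (t * a, t * b) ^ (d - k) = t ^ d * (c k * a ^ k * b ^ (d - k))"
      by (simp add: power_mult_distrib algebra_simps)
  qed simp
  then show "binform d c (t*a, t*b) = t^d * binform d c (a,b)"
    by (simp add: binform_def sum_distrib_left)
next
  fix a b :: "complex \<times> complex"
  show "\<exists>Q. \<forall>t. poly Q t = binform d c (fst a + t * fst b, snd a + t * snd b)"
    by (rule exI[of _ "\<Sum>k\<le>d. [:c k:] * [:fst a, fst b:]^k * [:snd a, snd b:]^(d-k)"])
       (simp add: poly_sum binform_def mult.assoc)
qed

lemma homog_mult: "homog e q \<Longrightarrow> homog e' r \<Longrightarrow> homog (e+e') (\<lambda>v. q v * r v)"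
  unfolding homog_def
proof safe
  fix t a b
  assume "\<forall>t a b. q (t * a, t * b) = t ^ e * q (a, b)" "\<forall>t a b. r (t * a, t * b) = t ^ e' * r (a, b)"
  then show "q (t * a, t * b) * r (t * a, t * b) = t ^ (e + e') * (q (a, b) * r (a, b))"
    by (simp add: power_add)
next
  fix a b :: "complex \<times> complex"
  assume "\<forall>a b :: complex \<times> complex. \<exists>Q. \<forall>t. poly Q t = q (fst a + t*fst b, snd a + t*snd b)"
    "\<forall>a b :: complex \<times> complex. \<exists>Q. \<forall>t. poly Q t = r (fst a + t*fst b, snd a + t*snd b)"
  then obtain Q R where "\<forall>t. poly Q t = q (fst a + t*fst b, snd a + t*snd b)"
    "\<forall>t. poly R t = r (fst a + t*fst b, snd a + t*snd b)" by blast
  then show "\<exists>Q. \<forall>t. poly Q t = q (fst a + t * fst b, snd a + t * snd b) * r (fst a + t * fst b, snd a + t * snd b)"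
    by (intro exI[of _ "Q*R"]) simp
qed

lemma homog_zero: "homog e (\<lambda>v. 0)"
  unfolding homog_def by (auto intro: exI[of _ 0])

lemma homog_add: "homog e q \<Longrightarrow> homog e r \<Longrightarrow> homog e (\<lambda>v. q v + r v)"
  unfolding homog_def
proof safe
  fix t a b
  assume "\<forall>t a b. q (t * a, t * b) = t ^ e * q (a, b)" "\<forall>t a b. r (t * a, t * b) = t ^ e * r (a, b)"
  then show "q (t * a, t * b) + r (t * a, t * b) = t ^ e * (q (a, b) + r (a, b))"
    by (simp add: distrib_left)
next
  fix a b :: "complex \<times> complex"
  assume "\<forall>a b :: complex \<times> complex. \<exists>Q. \<forall>t. poly Q t = q (fst a + t*fst b, snd a + t*snd b)"
    "\<forall>a b :: complex \<times> complex. \<exists>Q. \<forall>t. poly Q t = r (fst a + t*fst b, snd a + t*snd b)"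
  then obtain Q R where "\<forall>t. poly Q t = q (fst a + t*fst b, snd a + t*snd b)"
    "\<forall>t. poly R t = r (fst a + t*fst b, snd a + t*snd b)" by blast
  then show "\<exists>Q. \<forall>t. poly Q t = q (fst a + t * fst b, snd a + t * snd b) + r (fst a + t * fst b, snd a + t * snd b)"
    by (intro exI[of _ "Q+R"]) simp
qed

lemma homog_sum: "finite A \<Longrightarrow> (\<forall>k\<in>A. homog e (q k)) \<Longrightarrow> homog e (\<lambda>v. \<Sum>k\<in>A. q k v)"
proof (induction A rule: finite_induct)
  case empty
  then show ?case by (simp add: homog_zero)
next
  case (insert x F)
  then show ?case by (simp add: homog_add)
qed

lemma homog_lin: "homog 1 (\<lambda>v. fst v * A + snd v * B)"
  unfolding homog_def
proof safe
  fix a b :: "complex \<times> complex"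
  show "\<exists>Q. \<forall>t. poly Q t = fst (fst a + t * fst b, snd a + t * snd b) * A + snd (fst a + t * fst b, snd a + t * snd b) * B"
    by (rule exI[of _ "[:fst a * A + snd a * B, fst b * A + snd b * B:]"]) (simp add: algebra_simps)
qed (simp add: algebra_simps)

lemma finite_roots_lin:
  fixes a b :: complex assumes "a \<noteq> 0"
  shows "finite {t. a + t*b = 0}"
proof -
  have "[:a, b:] \<noteq> 0" using assms by simp
  then have "finite {t. poly [:a, b:] t = 0}" by (rule poly_roots_finite)
  then show ?thesis by (simp add: algebra_simps)
qed

lemma Z:
  assumes hp: "homog d p" and hq: "homog e q" and p0: "p v0 \<noteq> 0" and v0: "v0 \<noteq> (0,0)"
    and H: "\<forall>v. v \<noteq> (0,0) \<and> p v \<noteq> 0 \<longrightarrow> q v = 0"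
  shows "q v = 0"
proof -
  obtain P where P: "\<forall>t. poly P t = p (fst v0 + t*fst v, snd v0 + t*snd v)"
    using hp unfolding homog_def by blast
  obtain Q where Q: "\<forall>t. poly Q t = q (fst v0 + t*fst v, snd v0 + t*snd v)"
    using hq unfolding homog_def by blast
  have "poly P 0 \<noteq> 0" using P p0 by simp
  then have Pnz: "P \<noteq> 0" by auto
  define E where "E = {t. poly P t = 0} \<union> {t. fst v0 + t*fst v = 0 \<and> snd v0 + t*snd v = 0}"
  have f2: "finite {t. fst v0 + t*fst v = 0 \<and> snd v0 + t*snd v = 0}"
  proof (cases "fst v0 = 0")
    case True
    then have "snd v0 \<noteq> 0" using v0 by (cases v0) auto
    then show ?thesis by (rule finite_subset[OF _ finite_roots_lin, rotated]) auto
  next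
    case False
    then show ?thesis by (rule finite_subset[OF _ finite_roots_lin, rotated]) auto
  qed
  have fE: "finite E" unfolding E_def using poly_roots_finite[OF Pnz] f2 by simp
  have QE: "\<forall>t. t \<notin> E \<longrightarrow> poly Q t = 0"
    using H P Q unfolding E_def by auto
  have "Q = 0"
  proof (rule ccontr)
    assume "Q \<noteq> 0"
    then have "finite {t. poly Q t = 0}" by (rule poly_roots_finite)
    moreover have "UNIV \<subseteq> E \<union> {t. poly Q t = 0}" using QE by auto
    ultimately have "finite (UNIV :: complex set)" using fE by (meson finite_UnI finite_subset)
    then show False by (simp add: infinite_UNIV_char_0)
  qed
  then have Q0: "\<forall>t. q (fst v0 + t*fst v, snd v0 + t*snd v) = 0" using Q by simp
  obtain R where R: "\<forall>s. poly R s = q (fst v + s*fst v0, snd v + s*snd v0)"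
    using hq unfolding homog_def by blast
  have Rs: "poly R s = 0" if "s \<noteq> 0" for s
  proof -
    have "(fst v + s*fst v0, snd v + s*snd v0) = (s*(fst v0 + (1/s)*fst v), s*(snd v0 + (1/s)*snd v))"
      using that by (simp add: algebra_simps)
    then have "poly R s = s^e * q (fst v0 + (1/s)*fst v, snd v0 + (1/s)*snd v)"
      using R hq unfolding homog_def by metis
    then show ?thesis using Q0 by (metis mult_zero_right)
  qed
  have "R = 0"
  proof (rule ccontr)
    assume "R \<noteq> 0"
    then have "finite {t. poly R t = 0}" by (rule poly_roots_finite)
    moreover have "UNIV \<subseteq> {0} \<union> {t. poly R t = 0}" using Rs by auto
    ultimately have "finite (UNIV :: complex set)" by (meson finite_UnI finite_subset finite.intros)
    then show False by (simp add: infinite_UNIV_char_0)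
  qed
  then show ?thesis using R by (metis poly_0 mult_zero_left add_0_right prod.collapse)
qed

lemma Sigma0_contract:
  assumes "T \<in> Sigma0 m j u" "j < m" "length xs = m"
  shows "fst u * T (xs[j:=False]) + snd u * T (xs[j:=True]) = 0"
proof -
  have "\<exists>(n::nat) (\<alpha> :: nat \<Rightarrow> nat \<Rightarrow> bool \<Rightarrow> complex).
      (\<forall>r<n. covec_app (\<alpha> r j) u = 0) \<and>
      T = (\<lambda>xs. if length xs = m then (\<Sum>r<n. \<Prod>k<m. \<alpha> r k (xs ! k)) else 0)"
    using assms(1) unfolding Sigma0_def mem_Collect_eq .
  then obtain n :: nat and \<alpha> where al: "\<forall>r<n. covec_app (\<alpha> r j) u = 0"
    and T: "T = (\<lambda>xs. if length xs = m then (\<Sum>r<n. \<Prod>k<m. \<alpha> r k (xs ! k)) else 0)"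
    by (elim exE conjE) (rule that; assumption)
  have pr: "(\<Prod>k<m. \<alpha> r k (xs[j:=b] ! k)) = \<alpha> r j b * (\<Prod>k\<in>{..<m}-{j}. \<alpha> r k (xs ! k))" for r b
  proof -
    have "(\<Prod>k<m. \<alpha> r k (xs[j:=b] ! k)) = \<alpha> r j (xs[j:=b] ! j) * (\<Prod>k\<in>{..<m}-{j}. \<alpha> r k (xs[j:=b] ! k))"
      using assms(2) by (simp add: prod.remove)
    also have "(\<Prod>k\<in>{..<m}-{j}. \<alpha> r k (xs[j:=b] ! k)) = (\<Prod>k\<in>{..<m}-{j}. \<alpha> r k (xs ! k))"
      by (rule prod.cong) auto
    finally show ?thesis using assms by simp
  qed
  have "fst u * T (xs[j:=False]) + snd u * T (xs[j:=True])
      = (\<Sum>r<n. (\<Prod>k\<in>{..<m}-{j}. \<alpha> r k (xs ! k)) * covec_app (\<alpha> r j) u)"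
    using assms(3) by (simp add: T pr covec_app_def sum_distrib_left sum.distrib[symmetric] algebra_simps)
  also have "\<dots> = 0" using al by simp
  finally show ?thesis .
qed

definition ek :: "nat \<Rightarrow> nat \<Rightarrow> complex" where "ek k = (\<lambda>i. if i = k then 1 else 0)"

lemma expand:
  assumes add: "\<forall>x\<in>hspace m. \<forall>y\<in>hspace m. \<phi> (\<lambda>k. x k + y k) = (\<lambda>t. \<phi> x t + \<phi> y t)"
    and scal: "\<forall>x\<in>hspace m. \<forall>c. \<phi> (\<lambda>k. c * x k) = (\<lambda>t. c * \<phi> x t)"
    and x: "x \<in> hspace m"
  shows "\<phi> x = (\<lambda>t. \<Sum>k\<le>m. x k * \<phi> (ek k) t)"
proof -
  have ekh: "n \<le> m \<Longrightarrow> ek n \<in> hspace m" for n by (auto simp: ek_def hspace_def)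
  have "n \<le> Suc m \<Longrightarrow> \<phi> (\<lambda>i. if i < n then x i else 0) = (\<lambda>t. \<Sum>k<n. x k * \<phi> (ek k) t)" for n
  proof (induction n)
    case 0
    have z: "(\<lambda>i::nat. 0::complex) \<in> hspace m" by (simp add: hspace_def)
    have "\<phi> (\<lambda>k. 0 * (0::complex)) = (\<lambda>t. 0 * \<phi> (\<lambda>i. 0) t)" using scal[rule_format, OF z, of 0] by simp
    then show ?case by simp
  next
    case (Suc n)
    have h1: "(\<lambda>i. if i < n then x i else 0) \<in> hspace m" using x by (auto simp: hspace_def)
    have h2: "(\<lambda>i. x n * ek n i) \<in> hspace m" using Suc.prems by (auto simp: hspace_def ek_def)
    have eq: "(\<lambda>i. if i < Suc n then x i else 0) = (\<lambda>i. (if i < n then x i else 0) + x n * ek n i)"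
      by (auto simp: ek_def less_Suc_eq)
    have s: "\<phi> (\<lambda>i. x n * ek n i) = (\<lambda>t. x n * \<phi> (ek n) t)"
      using scal ekh[of n] Suc.prems by simp
    show ?case unfolding eq using add h1 h2 Suc s by simp
  qed
  from this[of "Suc m"] have "\<phi> (\<lambda>i. if i < Suc m then x i else 0) = (\<lambda>t. \<Sum>k<Suc m. x k * \<phi> (ek k) t)" by simp
  moreover have "(\<lambda>i. if i < Suc m then x i else 0) = x" using x by (auto simp: hspace_def)
  ultimately show ?thesis by (simp add: lessThan_Suc_atMost)
qed

theorem corollary2p7:
  fixes m j :: nat and \<phi> :: "(nat \<Rightarrow> complex) \<Rightarrow> (bool list \<Rightarrow> complex)"
    and \<psi> :: "complex \<times> complex \<Rightarrow> nat \<Rightarrow> complex"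
  assumes "factorization_structure m \<phi>" and "j < m"
    and "factorization_curve m \<phi> j \<psi>"
    and "v \<noteq> (0, 0)" and "w \<noteq> (0, 0)"
    and "\<exists>c::complex. \<psi> w = (\<lambda>k. c * \<psi> v k)"
  shows "\<exists>c::complex. w = (c * fst v, c * snd v)"
proof (rule ccontr)
  assume nc: "\<not> (\<exists>c::complex. w = (c * fst v, c * snd v))"
  have Vs: "\<forall>x\<in>hspace m. \<phi> x \<in> Vstar m"
    and add: "\<forall>x\<in>hspace m. \<forall>y\<in>hspace m. \<phi> (\<lambda>k. x k + y k) = (\<lambda>t. \<phi> x t + \<phi> y t)"
    and scal: "\<forall>x\<in>hspace m. \<forall>c. \<phi> (\<lambda>k. c * x k) = (\<lambda>t. c * \<phi> x t)"
    and inj: "inj_on \<phi> (hspace m)"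
    using assms(1) unfolding factorization_structure_def by auto
  obtain d cs where psi: "\<forall>v. \<psi> v = (\<lambda>k. if k \<le> m then binform d (cs k) v else 0)"
    and nz: "\<forall>v. v \<noteq> (0, 0) \<longrightarrow> (\<exists>k\<le>m. binform d (cs k) v \<noteq> 0)"
    using assms(3) unfolding factorization_curve_def regular_P1_map_def by blast
  obtain U where zU: "zariski_open_P1 U" and Une: "U \<noteq> {}"
    and eqU: "\<forall>v\<in>U. {x\<in>hspace m. \<phi> x \<in> \<phi> ` hspace m \<inter> Sigma0 m j v} = {(\<lambda>k. c * \<psi> v k) | c. True}"
    using assms(3) unfolding factorization_curve_def by blast
  have psih: "\<psi> u \<in> hspace m" for u
  proof -
    have "\<psi> u = (\<lambda>k. if k \<le> m then binform d (cs k) u else 0)" using psi by blast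
    then show ?thesis by (simp add: hspace_def)
  qed
  have A: "\<phi> (\<psi> u) \<in> Sigma0 m j u" if "u \<in> U" for u
  proof -
    have "\<psi> u \<in> {(\<lambda>k. c * \<psi> u k) | c. True}" by (rule CollectI, rule exI[of _ 1]) simp
    then show ?thesis using eqU that by blast
  qed
  have K: "fst u * \<phi> (\<psi> u) (xs[j:=False]) + snd u * \<phi> (\<psi> u) (xs[j:=True]) = 0"
    if len: "length xs = m" for u xs
  proof -
    define g where "g = (\<lambda>u. fst u * \<phi> (\<psi> u) (xs[j:=False]) + snd u * \<phi> (\<psi> u) (xs[j:=True]))"
    have geq: "g = (\<lambda>u. \<Sum>k\<le>m. binform d (cs k) u * (fst u * \<phi> (ek k) (xs[j:=False]) + snd u * \<phi> (ek k) (xs[j:=True])))"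
    proof
      fix u
      have e: "\<phi> (\<psi> u) = (\<lambda>t. \<Sum>k\<le>m. \<psi> u k * \<phi> (ek k) t)" by (rule expand[OF add scal psih])
      have "\<phi> (\<psi> u) = (\<lambda>t. \<Sum>k\<le>m. binform d (cs k) u * \<phi> (ek k) t)"
        unfolding e by (rule ext, rule sum.cong) (auto simp: psi)
      then show "g u = (\<Sum>k\<le>m. binform d (cs k) u * (fst u * \<phi> (ek k) (xs[j:=False]) + snd u * \<phi> (ek k) (xs[j:=True])))"
        by (simp add: g_def sum_distrib_left sum.distrib algebra_simps)
    qed
    have hg: "homog (d + 1) g" unfolding geq
      by (rule homog_sum) (simp, intro ballI homog_mult[OF homog_binform homog_lin])
    obtain v0 where v0U: "v0 \<in> U" using Une by blast
    obtain F where UF: "U = {v. v \<noteq> (0, 0) \<and> (\<exists>(d, c)\<in>F. binform d c v \<noteq> 0)}"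
      using zU unfolding zariski_open_P1_def by blast
    obtain d' f where df: "(d', f) \<in> F" "binform d' f v0 \<noteq> 0" and v0nz: "v0 \<noteq> (0,0)"
      using v0U UF by blast
    have H: "\<forall>v. v \<noteq> (0,0) \<and> binform d' f v \<noteq> 0 \<longrightarrow> g v = 0"
    proof (intro allI impI)
      fix v assume "v \<noteq> (0,0) \<and> binform d' f v \<noteq> 0"
      then have "v \<in> U" using UF df by blast
      then show "g v = 0" unfolding g_def by (rule Sigma0_contract[OF A assms(2) len])
    qed
    have "g u = 0" by (rule Z[OF homog_binform hg df(2) v0nz H])
    then show ?thesis by (simp add: g_def)
  qed
  obtain c where c: "\<psi> w = (\<lambda>k. c * \<psi> v k)" using assms(6) by blast
  define T where "T = \<phi> (\<psi> v)"
  have Tw: "\<phi> (\<psi> w) = (\<lambda>t. c * T t)" unfolding c T_def using scal psih by blast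
  have "c \<noteq> 0"
  proof
    assume "c = 0"
    then have "\<psi> w = (\<lambda>k. 0)" using c by simp
    then show False using nz assms(5) psi by (metis)
  qed
  have det: "fst v * snd w - snd v * fst w \<noteq> 0"
  proof
    assume dz: "fst v * snd w - snd v * fst w = 0"
    show False
    proof (cases "fst v = 0")
      case True
      then have "snd v \<noteq> 0" using assms(4) by (cases v) auto
      then have "w = (snd w / snd v * fst v, snd w / snd v * snd v)"
        using dz True by (cases w) (auto simp: field_simps)
      then show False using nc by blast
    next
      case False
      then have "w = (fst w / fst v * fst v, fst w / fst v * snd v)"
        using dz by (cases w) (auto simp: field_simps)
      then show False using nc by blast
    qed
  qed
  have T0: "T xs = 0" for xs
  proof (cases "length xs = m")
    case True
    define p where "p = T (xs[j:=False])"
    define q where "q = T (xs[j:=True])"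
    have e1: "fst v * p + snd v * q = 0" using K[OF True, of v] by (simp add: p_def q_def T_def)
    have "fst w * (c * p) + snd w * (c * q) = 0" using K[OF True, of w] Tw by (simp add: p_def q_def)
    then have e2: "fst w * p + snd w * q = 0" using \<open>c \<noteq> 0\<close>
      by (metis (no_types, lifting) distrib_left mult.left_commute mult_eq_0_iff)
    have "p * (fst v * snd w - snd v * fst w) = snd w * (fst v * p + snd v * q) - snd v * (fst w * p + snd w * q)"
      by (simp add: algebra_simps)
    then have "p = 0" using e1 e2 det by simp
    have "q * (fst v * snd w - snd v * fst w) = fst v * (fst w * p + snd w * q) - fst w * (fst v * p + snd v * q)"
      by (simp add: algebra_simps)
    then have "q = 0" using e1 e2 det by simp
    have "xs = xs[j := xs ! j]" by simp
    then show ?thesis using \<open>p = 0\<close> \<open>q = 0\<close> unfolding p_def q_def by (cases "xs ! j") auto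
  next
    case False
    then show ?thesis using Vs psih unfolding T_def Vstar_def by blast
  qed
  have z: "(\<lambda>i::nat. 0::complex) \<in> hspace m" by (simp add: hspace_def)
  have "\<phi> (\<lambda>k. 0 * (0::complex)) = (\<lambda>t. 0 * \<phi> (\<lambda>i. 0) t)" using scal[rule_format, OF z, of 0] by simp
  then have "\<phi> (\<lambda>i. 0) = \<phi> (\<psi> v)" using T0 unfolding T_def by auto
  then have "\<psi> v = (\<lambda>i. 0)" using inj z psih by (metis inj_on_def)
  then show False using nz assms(4) psi by metis
qed

end
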